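(* Let $X$ be a $d\times d$ positive semidefinite matrix with eigenvalue vector $\lambda\in\mathbb{R}^d_+$ and let $1\le j\le d$. Then $e_j(\lambda)\ge\exp(\Gamma_j(X))$. More precisely, if $\lambda_1\ge\dots\ge\lambda_d$ and $k$ is the unique integer with $0\le k\le j-1$ and $\lambda_k>\frac{1}{j-k}\sum_{i>k}\lambda_i\ge\lambda_{k+1}$ (with $\lambda_0=\infty$), then $\lambda$ is majorized by the vector $\mu$ with $\mu_i=\lambda_i$ for $i\le k$, $\mu_i=\frac{1}{j-k}\sum_{t>k}\lambda_t$ for $k<i\le j$, and $\mu_i=0$ for $i>j$, and $e_j(\lambda)\ge e_j(\mu)=\exp(\Gamma_j(X))$.
   Context: $e_j(x_1,\dots,x_d)\coloneqq\sum_{S\subseteq[d],|S|=j}\prod_{i\in S}x_i$ is the elementary symmetric polynomial of degree $j$. For $x,y\in\mathbb{R}^d_+$, $x$ is majorized by $y$ if $\sum_{i=1}^\ell x_{(i)}\le\sum_{i=1}^\ell y_{(i)}$ for all $1\le\ell\le d-1$ and $\sum_{i=1}^d x_{(i)}=\sum_{i=1}^d y_{(i)}$, where $x_{(i)}$ is the $i$-th largest coordinate. For $x\in\mathbb{R}^d_+$, with $k$ the unique integer in $\{0,\dots,j-1\}$ such that $x_{(k)}>\frac{1}{j-k}\sum_{i>k}x_{(i)}\ge x_{(k+1)}$ ($x_{(0)}=\infty$), $\gamma_j(x)\coloneqq\sum_{i=1}^k\ln x_{(i)}+(j-k)\ln\big(\frac{1}{j-k}\sum_{i=k+1}^d x_{(i)}\big)$,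 with $\ln 0=-\infty$ and $\exp(-\infty)=0$; $\Gamma_j(X)\coloneqq\gamma_j(\lambda)$. *)

theory Defs
  imports "Jordan_Normal_Form.Char_Poly" "HOL-Library.Extended_Real"
begin

definition esym :: "nat \<Rightarrow> real list \<Rightarrow> real" where
  "esym j xs = (\<Sum>S\<in>{S. S \<subseteq> {0..<length xs} \<and> card S = j}. \<Prod>i\<in>S. xs ! i)"

text \<open>Decreasing rearrangement; ordc xs i is x_(i), the i-th largest coordinate (1-indexed).\<close>
definition dsort :: "real list \<Rightarrow> real list" where
  "dsort xs = rev (sort xs)"

definition ordc :: "real list \<Rightarrow> nat \<Rightarrow> real" where
  "ordc xs i = dsort xs ! (i - 1)"

definition majorized :: "real list \<Rightarrow> real list \<Rightarrow> bool" where
  "majorized x y \<longleftrightarrow> length x = length y \<and>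
     (\<forall>l. 1 \<le> l \<and> l \<le> length x - 1 \<longrightarrow>
        (\<Sum>i=1..l. ordc x i) \<le> (\<Sum>i=1..l. ordc y i)) \<and>
     (\<Sum>i=1..length x. ordc x i) = (\<Sum>i=1..length y. ordc y i)"

definition tailavg :: "nat \<Rightarrow> nat \<Rightarrow> real list \<Rightarrow> real" where
  "tailavg j k xs = (\<Sum>i=k+1..length xs. ordc xs i) / real (j - k)"

text \<open>The defining condition of k (with x_(0) = infinity).\<close>
definition kcond :: "nat \<Rightarrow> real list \<Rightarrow> nat \<Rightarrow> bool" where
  "kcond j xs k \<longleftrightarrow> (k = 0 \<or> ordc xs k > tailavg j k xs) \<and> tailavg j k xs \<ge> ordc xs (k + 1)"

definition kidx :: "nat \<Rightarrow> real list \<Rightarrow> nat" where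
  "kidx j xs = (THE k. k < j \<and> kcond j xs k)"

definition lnE :: "real \<Rightarrow> ereal" where
  "lnE x = (if x = 0 then MInfty else ereal (ln x))"

fun expE :: "ereal \<Rightarrow> real" where
  "expE (ereal x) = exp x"
| "expE MInfty = 0"
| "expE PInfty = undefined"

definition gammaj :: "nat \<Rightarrow> real list \<Rightarrow> ereal" where
  "gammaj j xs = (let k = kidx j xs in
     (\<Sum>i=1..k. lnE (ordc xs i)) + ereal (real (j - k)) * lnE (tailavg j k xs))"

definition muvec :: "nat \<Rightarrow> nat \<Rightarrow> real list \<Rightarrow> real list" where
  "muvec j k xs = map (\<lambda>i. if i \<le> k then ordc xs i else if i \<le> j then tailavg j k xs else 0)
                      [1..<length xs + 1]"

definition psd :: "nat \<Rightarrow> real mat \<Rightarrow> bool" where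
  "psd d X \<longleftrightarrow> X \<in> carrier_mat d d \<and> transpose_mat X = X \<and>
     (\<forall>v \<in> carrier_vec d. v \<bullet> (X *\<^sub>v v) \<ge> 0)"

text \<open>lam is an eigenvalue vector of X: the eigenvalues listed with algebraic multiplicity.\<close>
definition eigvec_of :: "real mat \<Rightarrow> real list \<Rightarrow> bool" where
  "eigvec_of X lam \<longleftrightarrow> length lam = dim_row X \<and> char_poly X = (\<Prod>a\<leftarrow>lam. [:- a, 1:])"

definition GammaM :: "nat \<Rightarrow> real list \<Rightarrow> ereal" where
  "GammaM j lam = gammaj j lam"

end

theory Submission imports Defs "HOL-Combinatorics.Permutations" begin

definition EE :: "nat \<Rightarrow> nat set \<Rightarrow> (nat \<Rightarrow> real) \<Rightarrow> real" where
  "EE j I f = (\<Sum>S\<in>{S. S \<subseteq> I \<and> card S = j}. \<Prod>i\<in>S. f i)"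

lemma esym_EE: "esym j xs = EE j {0..<length xs} (nth xs)"
  unfolding esym_def EE_def by simp

lemma EE_nonneg: "(\<And>i. i \<in> I \<Longrightarrow> 0 \<le> f i) \<Longrightarrow> 0 \<le> EE j I f"
  unfolding EE_def by (intro sum_nonneg prod_nonneg) auto

lemma EE_cong: "(\<And>i. i \<in> I \<Longrightarrow> f i = g i) \<Longrightarrow> EE j I f = EE j I g"
  unfolding EE_def by (intro sum.cong prod.cong) auto

lemma EE_reindex:
  assumes "bij_betw p I J"
  shows "EE j I (f \<circ> p) = EE j J f"
proof -
  have inj: "inj_on p I" using assms bij_betw_def by blast
  have img: "(\<lambda>S. p ` S) ` {S. S \<subseteq> I \<and> card S = j} = {S. S \<subseteq> J \<and> card S = j}"
  proof (intro equalityI subsetI)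
    fix T assume "T \<in> (\<lambda>S. p ` S) ` {S. S \<subseteq> I \<and> card S = j}"
    then obtain S where S: "S \<subseteq> I" "card S = j" "T = p ` S" by auto
    then show "T \<in> {S. S \<subseteq> J \<and> card S = j}"
      using assms inj card_image[OF inj_on_subset[OF inj S(1)]] bij_betw_imp_surj_on by fastforce
  next
    fix T assume T: "T \<in> {S. S \<subseteq> J \<and> card S = j}"
    define S where "S = the_inv_into I p ` T"
    have "S \<subseteq> I" using T assms unfolding S_def
      by (auto intro: the_inv_into_into[OF inj] simp: bij_betw_def)
    moreover have "p ` S = T" using T assms unfolding S_def
      by (auto simp: bij_betw_def f_the_inv_into_f image_iff) (metis f_the_inv_into_f inj subsetD)+
    moreover have "card S = j" using calculation T card_image[OF inj_on_subset[OF inj \<open>S \<subseteq> I\<close>]] by simp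
    ultimately show "T \<in> (\<lambda>S. p ` S) ` {S. S \<subseteq> I \<and> card S = j}" by blast
  qed
  have injS: "inj_on (\<lambda>S. p ` S) {S. S \<subseteq> I \<and> card S = j}"
    using inj by (auto intro!: inj_onI dest: inj_on_image_eq_iff[OF inj])
  have "EE j J f = (\<Sum>S\<in>{S. S \<subseteq> I \<and> card S = j}. \<Prod>i\<in>p ` S. f i)"
    unfolding EE_def by (subst img[symmetric], subst sum.reindex[OF injS]) simp
  also have "\<dots> = EE j I (f \<circ> p)"
    unfolding EE_def by (intro sum.cong refl, subst prod.reindex) (auto intro: inj_on_subset[OF inj])
  finally show ?thesis by simp
qed

lemma EE_insert_sum:
  assumes fin: "finite I" and i: "i \<in> I" and m: "m \<ge> 1"
  shows "f i * EE (m-1) (I - {i}) f = (\<Sum>S\<in>{S. S \<subseteq> I \<and> card S = m \<and> i \<in> S}. \<Prod>k\<in>S. f k)"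
proof -
  have img: "insert i ` {T. T \<subseteq> I - {i} \<and> card T = m - 1} = {S. S \<subseteq> I \<and> card S = m \<and> i \<in> S}"
  proof (intro equalityI subsetI)
    fix S assume "S \<in> insert i ` {T. T \<subseteq> I - {i} \<and> card T = m - 1}"
    then obtain T where T: "T \<subseteq> I - {i}" "card T = m - 1" "S = insert i T" by auto
    have "finite T" "i \<notin> T" using T fin finite_subset by auto
    then have "card S = m" using T m by simp
    then show "S \<in> {S. S \<subseteq> I \<and> card S = m \<and> i \<in> S}" using T i m by auto
  next
    fix S assume S: "S \<in> {S. S \<subseteq> I \<and> card S = m \<and> i \<in> S}"
    have "finite S" using S fin finite_subset by blast
    then have "S - {i} \<in> {T. T \<subseteq> I - {i} \<and> card T = m - 1}" using S by auto
    moreover have "S = insert i (S - {i})" using S by auto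
    ultimately show "S \<in> insert i ` {T. T \<subseteq> I - {i} \<and> card T = m - 1}" by blast
  qed
  have inj: "inj_on (insert i) {T. T \<subseteq> I - {i} \<and> card T = m - 1}"
    by (rule inj_onI) (metis Diff_insert_absorb Diff_iff insert_subset mem_Collect_eq singletonI subset_Diff_insert)
  have "(\<Sum>S\<in>{S. S \<subseteq> I \<and> card S = m \<and> i \<in> S}. \<Prod>k\<in>S. f k)
      = (\<Sum>T\<in>{T. T \<subseteq> I - {i} \<and> card T = m - 1}. \<Prod>k\<in>insert i T. f k)"
    by (subst img[symmetric], subst sum.reindex[OF inj]) simp
  also have "\<dots> = (\<Sum>T\<in>{T. T \<subseteq> I - {i} \<and> card T = m - 1}. f i * (\<Prod>k\<in>T. f k))"
  proof (intro sum.cong refl)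
    fix T assume T: "T \<in> {T. T \<subseteq> I - {i} \<and> card T = m - 1}"
    then have "finite T" "i \<notin> T" using fin finite_subset by auto
    then show "(\<Prod>k\<in>insert i T. f k) = f i * (\<Prod>k\<in>T. f k)" by simp
  qed
  also have "\<dots> = f i * EE (m-1) (I - {i}) f" unfolding EE_def by (simp add: sum_distrib_left)
  finally show ?thesis by simp
qed

lemma EE_identity:
  assumes fin: "finite I" and m: "m \<ge> 1"
  shows "real m * EE m I f = (\<Sum>i\<in>I. f i * EE (m-1) (I - {i}) f)"
proof -
  let ?A = "{S. S \<subseteq> I \<and> card S = m}"
  have finA: "finite ?A" using fin by (auto intro: finite_subset[of _ "Pow I"])
  have "(\<Sum>i\<in>I. f i * EE (m-1) (I - {i}) f) = (\<Sum>i\<in>I. \<Sum>S\<in>{S\<in>?A. i \<in> S}. \<Prod>k\<in>S. f k)"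
    by (intro sum.cong refl, subst EE_insert_sum[OF fin _ m]) (auto intro!: sum.cong)
  also have "\<dots> = (\<Sum>S\<in>?A. \<Sum>i\<in>{i\<in>I. i \<in> S}. \<Prod>k\<in>S. f k)"
    by (rule sum.swap_restrict[OF fin finA])
  also have "\<dots> = (\<Sum>S\<in>?A. real m * (\<Prod>k\<in>S. f k))"
  proof (intro sum.cong refl)
    fix S assume "S \<in> ?A"
    then have "{i\<in>I. i \<in> S} = S" "card S = m" by auto
    then show "(\<Sum>i\<in>{i\<in>I. i \<in> S}. \<Prod>k\<in>S. f k) = real m * (\<Prod>k\<in>S. f k)" by simp
  qed
  also have "\<dots> = real m * EE m I f" unfolding EE_def by (simp add: sum_distrib_left)
  finally show ?thesis by simp
qed

lemma EE_lower:
  assumes "finite I" "\<And>i. i \<in> I \<Longrightarrow> 0 \<le> f i \<and> f i \<le> c" "0 \<le> c" "real m * c \<le> (\<Sum>i\<in>I. f i)"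
  shows "c ^ m \<le> EE m I f"
  using assms
proof (induction m arbitrary: I)
  case 0
  have "{S. S \<subseteq> I \<and> card S = 0} = {{}}" using 0(1) by (auto dest: finite_subset[OF _ 0(1)])
  then show ?case by (simp add: EE_def)
next
  case (Suc m)
  have step: "c ^ m \<le> EE m (I - {i}) f" if i: "i \<in> I" for i
  proof (rule Suc.IH)
    show "finite (I - {i})" using Suc.prems by simp
    show "\<And>k. k \<in> I - {i} \<Longrightarrow> 0 \<le> f k \<and> f k \<le> c" using Suc.prems by auto
    show "0 \<le> c" by fact
    have "(\<Sum>k\<in>I. f k) = f i + (\<Sum>k\<in>I - {i}. f k)" using Suc.prems(1) i by (simp add: sum.remove)
    then show "real m * c \<le> (\<Sum>k\<in>I - {i}. f k)" using Suc.prems(4) Suc.prems(2)[OF i] by (simp add: algebra_simps)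
  qed
  have "real (Suc m) * c ^ Suc m = real (Suc m) * c * c ^ m" by simp
  also have "\<dots> \<le> (\<Sum>i\<in>I. f i) * c ^ m" using Suc.prems(4) \<open>0 \<le> c\<close> by (intro mult_right_mono) auto
  also have "\<dots> = (\<Sum>i\<in>I. f i * c ^ m)" by (simp add: sum_distrib_right)
  also have "\<dots> \<le> (\<Sum>i\<in>I. f i * EE m (I - {i}) f)"
    by (intro sum_mono mult_left_mono step) (use Suc.prems in auto)
  also have "\<dots> = real (Suc m) * EE (Suc m) I f"
    using EE_identity[OF Suc.prems(1), of "Suc m" f] by simp
  finally have "real (Suc m) * c ^ Suc m \<le> real (Suc m) * EE (Suc m) I f" .
  then show ?case by simp
qed

lemma EE_split:
  assumes fin: "finite I" and A: "A \<subseteq> I" "card A \<le> j" and nn: "\<And>i. i \<in> I \<Longrightarrow> 0 \<le> f i"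
  shows "(\<Prod>i\<in>A. f i) * EE (j - card A) (I - A) f \<le> EE j I f"
proof -
  have finA: "finite A" using A fin finite_subset by blast
  let ?B = "{T. T \<subseteq> I - A \<and> card T = j - card A}"
  have inj: "inj_on (\<lambda>T. A \<union> T) ?B" by (rule inj_onI) auto
  have sub: "(\<lambda>T. A \<union> T) ` ?B \<subseteq> {S. S \<subseteq> I \<and> card S = j}"
  proof
    fix S assume "S \<in> (\<lambda>T. A \<union> T) ` ?B"
    then obtain T where T: "T \<subseteq> I - A" "card T = j - card A" "S = A \<union> T" by auto
    have "finite T" using T fin finite_subset by blast
    then have "card S = card A + card T" using T finA by (subst T(3), subst card_Un_disjoint) auto
    then show "S \<in> {S. S \<subseteq> I \<and> card S = j}" using T A by auto
  qed
  have finS: "finite {S. S \<subseteq> I \<and> card S = j}" using fin by (auto intro: finite_subset[of _ "Pow I"])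
  have "(\<Prod>i\<in>A. f i) * EE (j - card A) (I - A) f = (\<Sum>T\<in>?B. \<Prod>i\<in>A \<union> T. f i)"
    unfolding EE_def sum_distrib_left
  proof (intro sum.cong refl)
    fix T assume "T \<in> ?B"
    then have "finite T" "A \<inter> T = {}" using fin finite_subset by auto
    then show "(\<Prod>i\<in>A. f i) * (\<Prod>i\<in>T. f i) = (\<Prod>i\<in>A \<union> T. f i)" using finA by (simp add: prod.union_disjoint)
  qed
  also have "\<dots> = (\<Sum>S\<in>(\<lambda>T. A \<union> T) ` ?B. \<Prod>i\<in>S. f i)" by (simp add: sum.reindex[OF inj])
  also have "\<dots> \<le> EE j I f" unfolding EE_def
    by (rule sum_mono2[OF finS sub]) (auto intro!: prod_nonneg nn)
  finally show ?thesis .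
qed

lemma EE_zero_tail:
  assumes "j \<le> n" "\<And>i. j \<le> i \<Longrightarrow> i < n \<Longrightarrow> f i = 0"
  shows "EE j {0..<n} f = (\<Prod>i<j. f i)"
proof -
  have "EE j {0..<n} f = (\<Sum>S\<in>{{0..<j}}. \<Prod>i\<in>S. f i)" unfolding EE_def
  proof (rule sum.mono_neutral_right)
    show "finite {S. S \<subseteq> {0..<n} \<and> card S = j}" by (auto intro: finite_subset[of _ "Pow {0..<n}"])
    show "{{0..<j}} \<subseteq> {S. S \<subseteq> {0..<n} \<and> card S = j}" using assms by auto
    show "\<forall>S\<in>{S. S \<subseteq> {0..<n} \<and> card S = j} - {{0..<j}}. (\<Prod>i\<in>S. f i) = 0"
    proof
      fix S assume S: "S \<in> {S. S \<subseteq> {0..<n} \<and> card S = j} - {{0..<j}}"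
      have "\<exists>i\<in>S. j \<le> i"
      proof (rule ccontr)
        assume "\<not> ?thesis"
        then have "S \<subseteq> {0..<j}" by auto
        moreover have "card S = card {0..<j}" using S by simp
        ultimately have "S = {0..<j}" by (intro card_subset_eq) auto
        then show False using S by auto
      qed
      then obtain i where "i \<in> S" "j \<le> i" by blast
      moreover have "finite S" using S by (auto intro: finite_subset)
      moreover have "i < n" using S \<open>i \<in> S\<close> by auto
      ultimately show "(\<Prod>i\<in>S. f i) = 0" using assms(2) by (intro prod_zero) auto
    qed
  qed
  then show ?thesis by (simp add: atLeast0LessThan)
qed

lemma esym_dsort: "esym j (dsort xs) = esym j xs"
proof -
  have "mset (dsort xs) = mset xs" by (simp add: dsort_def)
  then obtain p where p: "p permutes {..<length xs}" "permute_list p xs = dsort xs"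
    by (rule mset_eq_permutation)
  have len: "length (dsort xs) = length xs" by (simp add: dsort_def)
  have "EE j {0..<length xs} (nth (dsort xs)) = EE j {0..<length xs} (nth xs \<circ> p)"
    using p permute_list_nth[OF p(1)] by (intro EE_cong) auto
  also have "\<dots> = EE j {0..<length xs} (nth xs)"
    by (rule EE_reindex) (use permutes_imp_bij[OF p(1)] in \<open>simp add: atLeast0LessThan\<close>)
  finally show ?thesis by (simp add: esym_EE len)
qed

lemma psd_eig_nonneg:
  assumes "psd d X" "eigvec_of X lam" "a \<in> set lam"
  shows "0 \<le> a"
proof -
  have X: "X \<in> carrier_mat d d" using assms(1) by (simp add: psd_def)
  have "poly (char_poly X) a = (\<Prod>b\<leftarrow>lam. poly [:- b, 1:] a)"
    using assms(2) by (simp add: eigvec_of_def poly_prod_list o_def)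
  also have "\<dots> = 0" using assms(3) by (simp add: prod_list_zero_iff)
  finally have "eigenvalue X a" using eigenvalue_root_char_poly[OF X] by simp
  then obtain v where v: "v \<in> carrier_vec d" "v \<noteq> 0\<^sub>v d" "X *\<^sub>v v = a \<cdot>\<^sub>v v"
    using X by (auto simp: eigenvalue_def eigenvector_def)
  have q: "0 \<le> v \<bullet> (X *\<^sub>v v)" using assms(1) v(1) by (simp add: psd_def)
  have vv: "v \<bullet> (X *\<^sub>v v) = a * (v \<bullet> v)" using v by simp
  have "v \<bullet> v = (\<Sum>i<d. (v $ i)^2)" using v by (simp add: scalar_prod_def power2_eq_square atLeast0LessThan)
  moreover have "\<exists>i<d. v $ i \<noteq> 0"
  proof (rule ccontr)
    assume "\<not> ?thesis"
    then have "v = 0\<^sub>v d" using v(1) by (intro eq_vecI) auto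
    then show False using v(2) by simp
  qed
  then obtain i where "i < d" "v $ i \<noteq> 0" by blast
  ultimately have "0 < v \<bullet> v"
    by (metis (no_types, lifting) finite_lessThan lessThan_iff power2_less_0 sum_pos2 zero_less_power2 linorder_not_le)
  then show ?thesis using q vv by (simp add: zero_le_mult_iff)
qed

lemma length_dsort[simp]: "length (dsort xs) = length xs" by (simp add: dsort_def)
lemma set_dsort[simp]: "set (dsort xs) = set xs" by (simp add: dsort_def)

lemma dsort_dec: "i \<le> i' \<Longrightarrow> i' < length xs \<Longrightarrow> dsort xs ! i' \<le> dsort xs ! i"
  unfolding dsort_def
  by (simp add: rev_nth) (rule sorted_nth_mono, auto)

lemma ordc_dec: "1 \<le> i \<Longrightarrow> i \<le> i' \<Longrightarrow> i' \<le> length xs \<Longrightarrow> ordc xs i' \<le> ordc xs i"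
  unfolding ordc_def by (rule dsort_dec) auto

lemma ordc_nn: "(\<forall>x\<in>set xs. 0 \<le> x) \<Longrightarrow> 1 \<le> i \<Longrightarrow> i \<le> length xs \<Longrightarrow> 0 \<le> ordc xs i"
proof -
  assume a: "\<forall>x\<in>set xs. 0 \<le> x" "1 \<le> i" "i \<le> length xs"
  then have "i - 1 < length (dsort xs)" by simp
  then have "dsort xs ! (i-1) \<in> set xs" using nth_mem set_dsort by metis
  then show ?thesis using a by (simp add: ordc_def)
qed

definition TT :: "real list \<Rightarrow> nat \<Rightarrow> real" where
  "TT xs k = (\<Sum>i=k+1..length xs. ordc xs i)"

lemma TT_step: "k < length xs \<Longrightarrow> TT xs k = ordc xs (k+1) + TT xs (k+1)"
  unfolding TT_def by (simp add: sum.atLeast_Suc_atMost)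

lemma TT_nn: "(\<forall>x\<in>set xs. 0 \<le> x) \<Longrightarrow> 0 \<le> TT xs k"
  unfolding TT_def by (intro sum_nonneg ordc_nn) auto

lemma tailavg_TT: "tailavg j k xs = TT xs k / real (j - k)"
  by (simp add: tailavg_def TT_def)

lemma kcond_iff:
  assumes "k < j"
  shows "kcond j xs k \<longleftrightarrow> (k = 0 \<or> TT xs k < real (j-k) * ordc xs k) \<and> real (j-k) * ordc xs (k+1) \<le> TT xs k"
  using assms unfolding kcond_def tailavg_TT
  by (simp add: pos_divide_less_eq pos_le_divide_eq mult.commute)

lemma A_propagate:
  assumes nn: "\<forall>x\<in>set xs. 0 \<le> x" and jn: "j \<le> length xs"
    and A: "real (j-k) * ordc xs (k+1) \<le> TT xs k" and km: "k < m" "m < j"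
  shows "real (j-m) * ordc xs (m+1) \<le> TT xs m \<and> real (j-m) * ordc xs m \<le> TT xs m"
  using km
proof (induction m rule: less_induct)
  case (less m)
  obtain p where p: "m = Suc p" using less.prems by (cases m) auto
  have Ap: "real (j-p) * ordc xs (p+1) \<le> TT xs p"
  proof (cases "k < p")
    case True then show ?thesis using less.IH[of p] less.prems p by auto
  next
    case False then have "p = k" using less.prems p by auto
    then show ?thesis using A by simp
  qed
  have st: "TT xs p = ordc xs (p+1) + TT xs m" using TT_step[of p xs] p less.prems jn by simp
  have jp: "real (j-p) = real (j-m) + 1" using p less.prems by auto
  have B: "real (j-m) * ordc xs m \<le> TT xs m" using Ap st jp p by (simp add: algebra_simps)
  have dec: "ordc xs (m+1) \<le> ordc xs m" using less.prems jn p by (intro ordc_dec) auto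
  have "real (j-m) * ordc xs (m+1) \<le> real (j-m) * ordc xs m" using dec by (intro mult_left_mono) auto
  then show ?case using B by simp
qed

lemma k_unique:
  assumes nn: "\<forall>x\<in>set xs. 0 \<le> x" and jn: "j \<le> length xs"
    and k1: "k1 < j" "kcond j xs k1" and k2: "k2 < j" "kcond j xs k2"
  shows "k1 = k2"
proof (rule ccontr)
  assume ne: "k1 \<noteq> k2"
  have no: False if a: "a < b" "b < j" "kcond j xs a" "kcond j xs b" for a b
  proof -
    have "real (j-a) * ordc xs (a+1) \<le> TT xs a" using a kcond_iff[of a j xs] by auto
    then have "real (j-b) * ordc xs b \<le> TT xs b" using A_propagate[OF nn jn _ a(1,2)] by auto
    moreover have "TT xs b < real (j-b) * ordc xs b" using a kcond_iff[of b j xs] by auto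
    ultimately show False by simp
  qed
  show False
  proof (cases "k1 < k2")
    case True then show ?thesis using no k1 k2 by blast
  next
    case False then have "k2 < k1" using ne by simp
    then show ?thesis using no k1 k2 by blast
  qed
qed

lemma k_exists:
  assumes nn: "\<forall>x\<in>set xs. 0 \<le> x" and jn: "j \<le> length xs" and j1: "1 \<le> j"
  shows "\<exists>k<j. kcond j xs k"
proof -
  let ?A = "\<lambda>k. k < j \<and> real (j-k) * ordc xs (k+1) \<le> TT xs k"
  have "?A (j-1)"
  proof -
    have "TT xs (j-1) = ordc xs j + TT xs j" using TT_step[of "j-1" xs] j1 jn by simp
    then show ?thesis using TT_nn[OF nn, of j] j1 by simp
  qed
  then obtain k where k: "?A k" "\<And>k'. k' < k \<Longrightarrow> \<not> ?A k'"
    using exists_least_iff[of ?A] by blast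
  have "k = 0 \<or> TT xs k < real (j-k) * ordc xs k"
  proof (cases k)
    case (Suc p)
    have "\<not> ?A p" using k(2) Suc by simp
    then have "TT xs p < real (j-p) * ordc xs (p+1)" using Suc k(1) by auto
    moreover have "TT xs p = ordc xs (p+1) + TT xs k" using TT_step[of p xs] Suc k(1) jn by simp
    moreover have "real (j-p) = real (j-k) + 1" using Suc k(1) by auto
    ultimately show ?thesis using Suc by (simp add: algebra_simps)
  qed simp
  then show ?thesis using k(1) kcond_iff[of k j xs] by blast
qed

definition muf :: "nat \<Rightarrow> nat \<Rightarrow> real list \<Rightarrow> nat \<Rightarrow> real" where
  "muf j k xs i = (if i \<le> k then ordc xs i else if i \<le> j then tailavg j k xs else 0)"

lemma muvec_nth: "i < length xs \<Longrightarrow> muvec j k xs ! i = muf j k xs (i+1)"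
  by (simp del: upt_Suc add: muvec_def muf_def)

lemma length_muvec[simp]: "length (muvec j k xs) = length xs" by (simp del: upt_Suc add: muvec_def)

lemma sum_shift_ordc: "(\<Sum>i\<in>{m..<n}. dsort xs ! i) = (\<Sum>i=m+1..n. ordc xs i)"
proof -
  have "(\<Sum>i=m+1..n. ordc xs i) = (\<Sum>i\<in>{Suc m..<Suc n}. ordc xs i)"
    by (simp add: atLeastLessThanSuc_atLeastAtMost)
  also have "\<dots> = (\<Sum>i\<in>{m..<n}. ordc xs (Suc i))" by (rule sum.shift_bounds_Suc_ivl)
  finally show ?thesis by (simp add: ordc_def)
qed

lemma prod_shift_ordc: "(\<Prod>i\<in>{m..<n}. dsort xs ! i) = (\<Prod>i=m+1..n. ordc xs i)"
proof -
  have "(\<Prod>i=m+1..n. ordc xs i) = (\<Prod>i\<in>{Suc m..<Suc n}. ordc xs i)"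
    by (simp add: atLeastLessThanSuc_atLeastAtMost)
  also have "\<dots> = (\<Prod>i\<in>{m..<n}. ordc xs (Suc i))" by (rule prod.shift_bounds_Suc_ivl)
  finally show ?thesis by (simp add: ordc_def)
qed

context
  fixes xs :: "real list" and j k :: nat
  assumes nn: "\<forall>x\<in>set xs. 0 \<le> x" and jn: "j \<le> length xs" and kj: "k < j" and kc: "kcond j xs k"
begin

lemma c_nn: "0 \<le> tailavg j k xs"
  unfolding tailavg_TT using TT_nn[OF nn] by simp

lemma c_ge: "ordc xs (k+1) \<le> tailavg j k xs"
  using kc by (simp add: kcond_def)

lemma c_lt: "1 \<le> k \<Longrightarrow> tailavg j k xs < ordc xs k"
  using kc by (simp add: kcond_def)

lemma ordc_pos: "1 \<le> i \<Longrightarrow> i \<le> k \<Longrightarrow> 0 < ordc xs i"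
proof -
  assume i: "1 \<le> i" "i \<le> k"
  have "ordc xs k \<le> ordc xs i" using i kj jn by (intro ordc_dec) auto
  then show ?thesis using c_lt c_nn i by linarith
qed

lemma muf_mono: "1 \<le> p \<Longrightarrow> p \<le> q \<Longrightarrow> q \<le> length xs \<Longrightarrow> muf j k xs q \<le> muf j k xs p"
proof -
  assume pq: "1 \<le> p" "p \<le> q" "q \<le> length xs"
  show ?thesis
  proof (cases "q \<le> k")
    case True then show ?thesis using pq by (simp add: muf_def ordc_dec)
  next
    case False
    show ?thesis
    proof (cases "p \<le> k")
      case True
      have "ordc xs k \<le> ordc xs p" using True pq kj jn by (intro ordc_dec) auto
      moreover have "muf j k xs q \<le> tailavg j k xs" using False c_nn by (simp add: muf_def)
      ultimately show ?thesis using True c_lt pq by (simp add: muf_def)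
    next
      case False then show ?thesis using pq \<open>\<not> q \<le> k\<close> c_nn by (simp add: muf_def)
    qed
  qed
qed

lemma dsort_muvec: "dsort (muvec j k xs) = muvec j k xs"
proof -
  have "sorted (rev (muvec j k xs))"
  proof (rule sorted_iff_nth_mono[THEN iffD2], intro allI impI)
    fix p q assume pq0: "p \<le> q" "q < length (rev (muvec j k xs))"
    then have pq: "p \<le> q \<and> q < length (rev (muvec j k xs))" by simp
    then have "rev (muvec j k xs) ! p = muf j k xs (length xs - p)"
      "rev (muvec j k xs) ! q = muf j k xs (length xs - q)"
      using muvec_nth[of "length xs - Suc p" xs j k] muvec_nth[of "length xs - Suc q" xs j k]
      by (auto simp add: rev_nth Suc_diff_Suc)
    moreover have "muf j k xs (length xs - p) \<le> muf j k xs (length xs - q)"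
      using pq by (intro muf_mono) auto
    ultimately show "rev (muvec j k xs) ! p \<le> rev (muvec j k xs) ! q" by simp
  qed
  then have "sort (muvec j k xs) = rev (muvec j k xs)" by (intro properties_for_sort) auto
  then show ?thesis by (simp add: dsort_def)
qed

lemma ordc_muvec: "1 \<le> i \<Longrightarrow> i \<le> length xs \<Longrightarrow> ordc (muvec j k xs) i = muf j k xs i"
  by (simp add: ordc_def dsort_muvec muvec_nth)

lemma sum_muf_le: "l \<le> j \<Longrightarrow> (\<Sum>i=1..l. ordc xs i) \<le> (\<Sum>i=1..l. muf j k xs i)"
proof (induction l)
  case 0 then show ?case by simp
next
  case (Suc l)
  have "ordc xs (Suc l) \<le> muf j k xs (Suc l)"
  proof (cases "Suc l \<le> k")
    case True then show ?thesis by (simp add: muf_def)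
  next
    case False
    then have "ordc xs (Suc l) \<le> ordc xs (k+1)" using Suc.prems jn by (intro ordc_dec) auto
    then show ?thesis using False Suc.prems c_ge by (simp add: muf_def)
  qed
  then show ?case using Suc by (simp add: sum.cl_ivl_Suc)
qed

lemma sum_muf_mid: "k \<le> l \<Longrightarrow> l \<le> j \<Longrightarrow> (\<Sum>i=1..l. muf j k xs i) = (\<Sum>i=1..k. ordc xs i) + real (l-k) * tailavg j k xs"
proof (induction l)
  case 0 then show ?case by (simp add: muf_def)
next
  case (Suc l)
  show ?case
  proof (cases "Suc l = k")
    case True
    then have "(\<Sum>i=1..Suc l. muf j k xs i) = (\<Sum>i=1..Suc l. ordc xs i)" by (intro sum.cong) (auto simp: muf_def)
    then show ?thesis using True by simp
  next
    case False
    then have "k \<le> l" using Suc.prems by simp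
    then have "(\<Sum>i=1..l. muf j k xs i) = (\<Sum>i=1..k. ordc xs i) + real (l-k) * tailavg j k xs"
      using Suc by simp
    moreover have "muf j k xs (Suc l) = tailavg j k xs" using \<open>k \<le> l\<close> Suc.prems by (simp add: muf_def)
    moreover have "real (Suc l - k) = real (l-k) + 1" using \<open>k \<le> l\<close> by simp
    ultimately show ?thesis by (simp add: sum.cl_ivl_Suc algebra_simps)
  qed
qed

lemma TT_eq: "real (j-k) * tailavg j k xs = TT xs k"
  using kj by (simp add: tailavg_TT)

lemma sum_ordc_split: "(\<Sum>i=1..length xs. ordc xs i) = (\<Sum>i=1..k. ordc xs i) + TT xs k"
proof -
  have "length xs = k + (length xs - k)" using kj jn by simp
  then have "(\<Sum>i=1..length xs. ordc xs i) = (\<Sum>i=1..k + (length xs - k). ordc xs i)" by simp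
  also have "\<dots> = (\<Sum>i=1..k. ordc xs i) + (\<Sum>i=k+1..k + (length xs - k). ordc xs i)"
    by (rule sum.ub_add_nat) simp
  also have "k + (length xs - k) = length xs" using kj jn by simp
  finally show ?thesis by (simp add: TT_def)
qed

lemma sum_muf_big: "j \<le> l \<Longrightarrow> (\<Sum>i=1..l. muf j k xs i) = (\<Sum>i=1..length xs. ordc xs i)"
proof (induction l)
  case 0 then show ?case using kj by simp
next
  case (Suc l)
  show ?case
  proof (cases "Suc l = j")
    case True
    then show ?thesis using sum_muf_mid[of "Suc l"] kj TT_eq sum_ordc_split by simp
  next
    case False
    then have "j \<le> l" "muf j k xs (Suc l) = 0" using Suc.prems kj by (auto simp: muf_def)
    then show ?thesis using Suc.IH by (simp add: sum.cl_ivl_Suc)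
  qed
qed

lemma majorized_mu: "majorized xs (muvec j k xs)"
proof -
  have eqs: "(\<Sum>i=1..l. ordc (muvec j k xs) i) = (\<Sum>i=1..l. muf j k xs i)" if "l \<le> length xs" for l
    using that by (intro sum.cong refl ordc_muvec) auto
  have part: "(\<Sum>i=1..l. ordc xs i) \<le> (\<Sum>i=1..l. muf j k xs i)" if l: "l \<le> length xs" for l
  proof (cases "l \<le> j")
    case True then show ?thesis by (rule sum_muf_le)
  next
    case False
    have "(\<Sum>i=1..l. ordc xs i) \<le> (\<Sum>i=1..length xs. ordc xs i)"
      using l by (intro sum_mono2) (auto intro: ordc_nn[OF nn])
    then show ?thesis using sum_muf_big[of l] False by simp
  qed
  show ?thesis unfolding majorized_def
    using part eqs sum_muf_big[of "length xs"] jn by auto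
qed

lemma esym_mu: "esym j (muvec j k xs) = (\<Prod>i=1..k. ordc xs i) * tailavg j k xs ^ (j-k)"
proof -
  have "esym j (muvec j k xs) = (\<Prod>i<j. muvec j k xs ! i)"
    unfolding esym_EE length_muvec
    by (rule EE_zero_tail) (use jn kj in \<open>auto simp: muvec_nth muf_def\<close>)
  also have "\<dots> = (\<Prod>i\<in>{0..<j}. muf j k xs (Suc i))"
    using jn by (intro prod.cong) (auto simp: muvec_nth)
  also have "\<dots> = (\<Prod>i\<in>{Suc 0..<Suc j}. muf j k xs i)" by (rule prod.shift_bounds_Suc_ivl[symmetric])
  also have "\<dots> = (\<Prod>i=1..k + (j-k). muf j k xs i)"
    using kj by (simp add: atLeastLessThanSuc_atLeastAtMost)
  also have "\<dots> = (\<Prod>i=1..k. muf j k xs i) * (\<Prod>i=k+1..k + (j-k). muf j k xs i)"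
    by (rule prod.ub_add_nat) simp
  also have "(\<Prod>i=1..k. muf j k xs i) = (\<Prod>i=1..k. ordc xs i)" by (intro prod.cong) (auto simp: muf_def)
  also have "(\<Prod>i=k+1..k + (j-k). muf j k xs i) = (\<Prod>i=k+1..k + (j-k). tailavg j k xs)"
    using kj by (intro prod.cong) (auto simp: muf_def)
  also have "\<dots> = tailavg j k xs ^ (j-k)" by simp
  finally show ?thesis .
qed

lemma esym_ge: "(\<Prod>i=1..k. ordc xs i) * tailavg j k xs ^ (j-k) \<le> esym j xs"
proof -
  let ?L = "dsort xs" and ?n = "length xs" and ?c = "tailavg j k xs"
  have L_nn: "\<And>i. i \<in> {0..<?n} \<Longrightarrow> 0 \<le> ?L ! i" using nn
    by (metis atLeastLessThan_iff length_dsort nth_mem set_dsort)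
  have "EE (j - card {0..<k}) ({0..<?n} - {0..<k}) (nth ?L) \<ge> ?c ^ (j-k)"
  proof -
    have I: "{0..<?n} - {0..<k} = {k..<?n}" by auto
    have "?c ^ (j-k) \<le> EE (j-k) {k..<?n} (nth ?L)"
    proof (rule EE_lower)
      show "finite {k..<?n}" by simp
      show "0 \<le> ?c" by (rule c_nn)
      show "\<And>i. i \<in> {k..<?n} \<Longrightarrow> 0 \<le> ?L ! i \<and> ?L ! i \<le> ?c"
      proof -
        fix i assume i: "i \<in> {k..<?n}"
        have "?L ! i \<le> ?L ! k" using i by (intro dsort_dec) auto
        then show "0 \<le> ?L ! i \<and> ?L ! i \<le> ?c" using L_nn[of i] i c_ge by (simp add: ordc_def)
      qed
      show "real (j-k) * ?c \<le> (\<Sum>i\<in>{k..<?n}. ?L ! i)"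
        using TT_eq by (simp add: sum_shift_ordc TT_def)
    qed
    then show ?thesis using I by simp
  qed
  moreover have "0 \<le> (\<Prod>i\<in>{0..<k}. ?L ! i)" using kj jn by (intro prod_nonneg L_nn) auto
  ultimately have "(\<Prod>i\<in>{0..<k}. ?L ! i) * ?c ^ (j-k) \<le>
     (\<Prod>i\<in>{0..<k}. ?L ! i) * EE (j - card {0..<k}) ({0..<?n} - {0..<k}) (nth ?L)"
    by (intro mult_left_mono) auto
  also have "\<dots> \<le> EE j {0..<?n} (nth ?L)"
    using kj jn by (intro EE_split L_nn) auto
  also have "\<dots> = esym j xs" using esym_dsort[of j xs] by (simp add: esym_EE)
  finally show ?thesis by (simp add: prod_shift_ordc)
qed

lemma gamma_val:
  assumes "kidx j xs = k"
  shows "expE (gammaj j xs) = (\<Prod>i=1..k. ordc xs i) * tailavg j k xs ^ (j-k)"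
proof -
  let ?c = "tailavg j k xs"
  have s: "(\<Sum>i=1..k. lnE (ordc xs i)) = ereal (\<Sum>i=1..k. ln (ordc xs i))"
  proof -
    have "(\<Sum>i=1..k. lnE (ordc xs i)) = (\<Sum>i=1..k. ereal (ln (ordc xs i)))"
      using ordc_pos by (intro sum.cong refl) (force simp: lnE_def)
    then show ?thesis by simp
  qed
  have g: "gammaj j xs = ereal (\<Sum>i=1..k. ln (ordc xs i)) + ereal (real (j - k)) * lnE ?c"
    unfolding gammaj_def Let_def assms s ..
  show ?thesis
  proof (cases "?c = 0")
    case True
    have e: "expE (-\<infinity>) = 0" using expE.simps(2) by simp
    show ?thesis using True g kj e by (simp add: lnE_def)
  next
    case False
    then have cp: "0 < ?c" using c_nn by simp
    then have "gammaj j xs = ereal ((\<Sum>i=1..k. ln (ordc xs i)) + real (j-k) * ln ?c)"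
      using g by (simp add: lnE_def)
    then have "expE (gammaj j xs) = exp (\<Sum>i=1..k. ln (ordc xs i)) * exp (real (j-k) * ln ?c)"
      by (simp add: exp_add)
    also have "exp (\<Sum>i=1..k. ln (ordc xs i)) = (\<Prod>i=1..k. ordc xs i)"
      using ordc_pos by (simp add: exp_sum)
    also have "exp (real (j-k) * ln ?c) = ?c ^ (j-k)" using cp by (simp add: exp_of_nat_mult)
    finally show ?thesis .
  qed
qed

end

theorem mainTheorem10:
  fixes X :: "real mat" and lam :: "real list" and d j :: nat
  assumes "psd d X"
    and "eigvec_of X lam"
    and "1 \<le> j" and "j \<le> d"
  shows "esym j lam \<ge> expE (GammaM j lam)
    \<and> (\<exists>!k. k < j \<and> kcond j lam k)
    \<and> (\<forall>k. k < j \<and> kcond j lam k \<longrightarrow>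
          majorized lam (muvec j k lam)
          \<and> esym j lam \<ge> esym j (muvec j k lam)
          \<and> esym j (muvec j k lam) = expE (GammaM j lam))"
proof -
  have nn: "\<forall>x\<in>set lam. 0 \<le> x" using psd_eig_nonneg[OF assms(1,2)] by blast
  have len: "length lam = d" using assms(1,2) by (auto simp: psd_def eigvec_of_def)
  have jn: "j \<le> length lam" using len assms(4) by simp
  have ex1: "\<exists>!k. k < j \<and> kcond j lam k"
    using k_exists[OF nn jn assms(3)] k_unique[OF nn jn] by blast
  have all: "majorized lam (muvec j k lam)
          \<and> esym j lam \<ge> esym j (muvec j k lam)
          \<and> esym j (muvec j k lam) = expE (GammaM j lam)" if k: "k < j" "kcond j lam k" for k
  proof -
    have kid: "kidx j lam = k" unfolding kidx_def
      by (rule the1_equality[OF ex1]) (use k in simp)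
    show ?thesis
      using majorized_mu[OF nn jn k] esym_ge[OF nn jn k] esym_mu[OF nn jn k] gamma_val[OF nn jn k kid]
      by (simp add: GammaM_def)
  qed
  obtain k where k: "k < j" "kcond j lam k" using ex1 by blast
  show ?thesis using all[OF k] ex1 all by auto
qed

end
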